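(* Let $(\mathcal G,\mathcal F)$ be a $B_n$-generalized almost pseudo-Hermitian structure on an odd exact Courant algebroid $E$ over a manifold $M$ of dimension $n$, let $U:=\ker\mathcal F$ and let $u_0\in\Gamma(U)$ satisfy $\langle u_0,u_0\rangle=(-1)^n$. Then: (i) $\mathcal G^{\mathrm{end}}(u_0)=(-1)^nu_0$; i.e. $u_0$ is a section of $E_+$ if $n$ is even and of $E_-$ if $n$ is odd; (ii) for all $u,v\in E$, $\mathcal G(\mathcal Fu,\mathcal Fv)=\mathcal G(u,v)-\langle u,u_0\rangle\langle v,u_0\rangle$ and $\mathcal G(\mathcal Fu,v)=-\mathcal G(u,\mathcal Fv)$, where $\mathcal G(u,v):=\langle\mathcal G^{\mathrm{end}}u,v\rangle$.
   Context: An odd exact Courant algebroid over an $n$-manifold $M$ is a Courant algebroid (vector bundle $E$ with nondegenerate symmetric scalar product $\langle\cdot,\cdot\rangle$, Dorfman bracket and anchor $\pi:E\to TM$) isomorphic to $TM\oplus T^*M\oplus\mathbb R$ with scalar product $\langle X+\xi+\lambda,Y+\eta+\mu\rangle=\tfrac12(\eta(X)+\xi(Y))+\lambda\mu$, anchor the projection and Dorfman bracket $[X+\xi+\lambda,Y+\eta+\mu]=\mathcal L_XY+\mathcal L_X\eta-i_Yd\xi+2\mu\,d\lambda+i_Xi_YH-2(\mu\,i_XF-\lambda\,i_YF)+X(\mu)-Y(\lambda)+F(X,Y)$ for some closed $2$-form $F$ and $3$-form $H$ with $dH=-F\wedge F$. A generalized metric is a rank $n$ subbundle $E_-\subset E$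 on which $\langle\cdot,\cdot\rangle$ is nondegenerate and with $\pi|_{E_-}$ an isomorphism onto $TM$; $E_+:=E_-^\perp$, $\mathcal G^{\mathrm{end}}=\pm\mathrm{Id}$ on $E_\pm$. A $B_n$-generalized almost complex structure is an endomorphism $\mathcal F$ whose $i$-eigenbundle $L\subset E\otimes\mathbb C$ is isotropic of rank $n$ with $L\cap\bar L=0$, whose $-i$-eigenbundle is $\bar L$ and which vanishes on the rank-one bundle $(L\oplus\bar L)^\perp$. A $B_n$-generalized almost pseudo-Hermitian structure is such a pair $(\mathcal G,\mathcal F)$ with $\mathcal G^{\mathrm{end}}\mathcal F=\mathcal F\mathcal G^{\mathrm{end}}$. *)

theory Defs
  imports "HOL-Analysis.Analysis"
begin

text \<open>Fibre of the odd exact Courant algebroid TM + T*M + R at a point of an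
n-manifold, n = CARD('n).  T_xM is identified with real^'n and T*_xM with
real^'n via the dual basis, so that the pairing eta(X) is the dot product.\<close>

type_synonym 'n fib = "(real^'n) \<times> (real^'n) \<times> real"

definition sp :: "('n::finite) fib \<Rightarrow> 'n fib \<Rightarrow> real" where
  "sp x y = (case x of (X, xi, l) \<Rightarrow> case y of (Y, eta, m) \<Rightarrow>
              (eta \<bullet> X + xi \<bullet> Y) / 2 + l * m)"

definition anchor :: "('n::finite) fib \<Rightarrow> real^'n" where
  "anchor x = fst x"

text \<open>Complexification E (x) C, modelled as pairs (a,b) meaning a + i b.\<close>

type_synonym 'n cfib = "('n::finite) fib \<times> 'n fib"

definition cmult_i :: "('n::finite) cfib \<Rightarrow> 'n cfib" where
  "cmult_i w = (- snd w, fst w)"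

definition cconj :: "('n::finite) cfib \<Rightarrow> 'n cfib" where
  "cconj w = (fst w, - snd w)"

definition csp :: "('n::finite) cfib \<Rightarrow> 'n cfib \<Rightarrow> complex" where
  "csp w z = Complex (sp (fst w) (fst z) - sp (snd w) (snd z))
                     (sp (fst w) (snd z) + sp (snd w) (fst z))"

definition cext :: "(('n::finite) fib \<Rightarrow> 'n fib) \<Rightarrow> 'n cfib \<Rightarrow> 'n cfib" where
  "cext F w = (F (fst w), F (snd w))"

definition complex_subspace :: "('n::finite) cfib set \<Rightarrow> bool" where
  "complex_subspace L \<longleftrightarrow> subspace L \<and> (\<forall>w\<in>L. cmult_i w \<in> L)"

definition complex_rank :: "('n::finite) cfib set \<Rightarrow> nat \<Rightarrow> bool" where
  "complex_rank L k \<longleftrightarrow> complex_subspace L \<and> dim L = 2 * k"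

definition isotropic :: "('n::finite) cfib set \<Rightarrow> bool" where
  "isotropic L \<longleftrightarrow> (\<forall>w\<in>L. \<forall>z\<in>L. csp w z = 0)"

definition i_eigenspace :: "(('n::finite) fib \<Rightarrow> 'n fib) \<Rightarrow> 'n cfib set" where
  "i_eigenspace F = {w. cext F w = cmult_i w}"

definition minus_i_eigenspace :: "(('n::finite) fib \<Rightarrow> 'n fib) \<Rightarrow> 'n cfib set" where
  "minus_i_eigenspace F = {w. cext F w = - cmult_i w}"

definition Bn_gen_almost_complex :: "(('n::finite) fib \<Rightarrow> 'n fib) \<Rightarrow> bool" where
  "Bn_gen_almost_complex F \<longleftrightarrow> linear F \<and>
     (let L = i_eigenspace F; Lbar = cconj ` L in
        isotropic L \<and> complex_rank L CARD('n) \<and> L \<inter> Lbar = {0} \<and>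
        minus_i_eigenspace F = Lbar \<and>
        (\<forall>w. (\<forall>z\<in>{a + b | a b. a \<in> L \<and> b \<in> Lbar}. csp w z = 0)
              \<longrightarrow> cext F w = 0))"

definition gen_metric :: "('n::finite) fib set \<Rightarrow> bool" where
  "gen_metric Em \<longleftrightarrow> subspace Em \<and> dim Em = CARD('n) \<and>
     (\<forall>x\<in>Em. (\<forall>y\<in>Em. sp x y = 0) \<longrightarrow> x = 0) \<and>
     bij_betw anchor Em UNIV"

definition Eplus :: "('n::finite) fib set \<Rightarrow> 'n fib set" where
  "Eplus Em = {x. \<forall>y\<in>Em. sp x y = 0}"

text \<open>G^end: +Id on E_+ and -Id on E_-\<close>
definition is_Gend :: "('n::finite) fib set \<Rightarrow> ('n fib \<Rightarrow> 'n fib) \<Rightarrow> bool" where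
  "is_Gend Em G \<longleftrightarrow> linear G \<and> (\<forall>x\<in>Eplus Em. G x = x) \<and> (\<forall>x\<in>Em. G x = - x)"

definition Bn_gen_almost_pseudo_hermitian ::
  "('n::finite) fib set \<Rightarrow> ('n fib \<Rightarrow> 'n fib) \<Rightarrow> ('n fib \<Rightarrow> 'n fib) \<Rightarrow> bool" where
  "Bn_gen_almost_pseudo_hermitian Em G F \<longleftrightarrow>
     gen_metric Em \<and> is_Gend Em G \<and> Bn_gen_almost_complex F \<and> G \<circ> F = F \<circ> G"

definition Gform :: "(('n::finite) fib \<Rightarrow> 'n fib) \<Rightarrow> 'n fib \<Rightarrow> 'n fib \<Rightarrow> real" where
  "Gform G u v = sp (G u) v"

end

theory Submission
  imports Defs
begin

definition Jm :: "('n::finite) fib \<Rightarrow> 'n fib" where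
  "Jm y = ((1/2) *\<^sub>R fst (snd y), (1/2) *\<^sub>R fst y, snd (snd y))"

lemma linear_Jm: "linear Jm"
  by (rule linearI) (auto simp: Jm_def algebra_simps)

lemma inj_Jm: "inj Jm"
  by (rule injI) (auto simp: Jm_def prod_eq_iff)

lemma sp_J: "sp x y = inner x (Jm y)"
  by (cases x; cases y) (auto simp: sp_def Jm_def inner_commute algebra_simps)

lemma sp_sym: "sp x y = sp y x"
  by (cases x; cases y) (auto simp: sp_def inner_commute algebra_simps)

lemma sp_add_left: "sp (x + y) z = sp x z + sp y z"
  by (simp add: sp_J inner_add_left)
lemma sp_add_right: "sp z (x + y) = sp z x + sp z y"
  by (metis sp_sym sp_add_left)
lemma sp_scale_left: "sp (c *\<^sub>R x) z = c * sp x z"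
  by (simp add: sp_J)
lemma sp_scale_right: "sp z (c *\<^sub>R x) = c * sp z x"
  by (metis sp_sym sp_scale_left)
lemma sp_minus_left: "sp (- x) z = - sp x z"
  by (simp add: sp_J)
lemma sp_minus_right: "sp z (- x) = - sp z x"
  by (metis sp_sym sp_minus_left)
lemma sp_diff_left: "sp (x - y) z = sp x z - sp y z"
  by (simp add: sp_J inner_diff_left)
lemma sp_diff_right: "sp z (x - y) = sp z x - sp z y"
  by (metis sp_sym sp_diff_left)
lemma sp_zero_left: "sp 0 z = 0"
  by (simp add: sp_J)
lemma sp_zero_right: "sp z 0 = 0"
  by (metis sp_sym sp_zero_left)

lemmas sp_simps = sp_add_left sp_add_right sp_scale_left sp_scale_right sp_minus_left
  sp_minus_right sp_diff_left sp_diff_right sp_zero_left sp_zero_right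

lemma even_dim_cs:
  fixes F :: "'a::euclidean_space \<Rightarrow> 'a"
  assumes lin: "linear F" and sS: "subspace S" and inv: "\<forall>x\<in>S. F x \<in> S \<and> F (F x) = - x"
  shows "even (dim S)"
proof -
  have main: "\<And>T. subspace T \<Longrightarrow> T \<subseteq> S \<Longrightarrow> (\<forall>x\<in>T. F x \<in> T) \<Longrightarrow> even (dim S - dim T)"
  proof -
    fix T0 :: "'a set"
    show "subspace T0 \<Longrightarrow> T0 \<subseteq> S \<Longrightarrow> (\<forall>x\<in>T0. F x \<in> T0) \<Longrightarrow> even (dim S - dim T0)"
    proof (induction "dim S - dim T0" arbitrary: T0 rule: less_induct)
      case less
      show ?case
      proof (cases "S \<subseteq> T0")
        case True
        then have "T0 = S" using less.prems by auto
        then show ?thesis by simp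
      next
        case False
        then obtain x where xS: "x \<in> S" and xT: "x \<notin> T0" by auto
        define T' where "T' = span (insert (F x) (insert x T0))"
        have sT': "subspace T'" unfolding T'_def by simp
        have T'S: "T' \<subseteq> S" unfolding T'_def
          using span_minimal[OF _ sS] less.prems xS inv by auto
        have FA: "F ` (insert (F x) (insert x T0)) \<subseteq> span (insert (F x) (insert x T0))"
        proof -
          have "F (F x) \<in> span (insert (F x) (insert x T0))"
            using inv xS span_base[of x "insert (F x) (insert x T0)"] span_neg by fastforce
          moreover have "F x \<in> span (insert (F x) (insert x T0))" by (simp add: span_base)
          moreover have "F ` T0 \<subseteq> span (insert (F x) (insert x T0))"
            using less.prems(3) by (auto intro!: span_base)
          ultimately show ?thesis by auto
        qed
        have invT': "\<forall>y\<in>T'. F y \<in> T'"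
        proof
          fix y assume "y \<in> T'"
          then have "F y \<in> F ` T'" by blast
          also have "F ` T' = span (F ` (insert (F x) (insert x T0)))"
            unfolding T'_def using span_linear_image[OF lin] by metis
          also have "\<dots> \<subseteq> T'" unfolding T'_def
            using FA span_minimal subspace_span by blast
          finally show "F y \<in> T'" .
        qed
        have spT: "span T0 = T0" using less.prems(1) by simp
        have Fx: "F x \<notin> span (insert x T0)"
        proof
          assume "F x \<in> span (insert x T0)"
          then obtain k where k: "F x - k *\<^sub>R x \<in> T0" using spT by (auto simp: span_insert)
          then have "F (F x - k *\<^sub>R x) \<in> T0" using less.prems(3) by blast
          then have "- x - k *\<^sub>R F x \<in> T0" using inv xS lin
            by (simp add: linear_diff linear_scale)
          then have "(- x - k *\<^sub>R F x) + k *\<^sub>R (F x - k *\<^sub>R x) \<in> T0"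
            using k less.prems(1) subspace_add subspace_scale by blast
          moreover have "(- x - k *\<^sub>R F x) + k *\<^sub>R (F x - k *\<^sub>R x) = - (1 + k*k) *\<^sub>R x"
            by (simp add: algebra_simps)
          ultimately have m1: "(- 1 / (1 + k*k)) *\<^sub>R (- (1 + k*k) *\<^sub>R x) \<in> T0"
            using less.prems(1) subspace_scale by metis
          have nz: "1 + k*k \<noteq> 0" by (metis add_pos_nonneg zero_less_one zero_le_square less_irrefl)
          have c1: "(- 1 / (1 + k*k)) * (- (1 + k*k)) = 1" using nz by (simp add: field_simps)
          have "x \<in> T0" using m1 c1 by (metis scaleR_scaleR scaleR_one)
          then show False using xT by simp
        qed
        have dT': "dim T' = dim T0 + 2"
          proof -
          have xT': "x \<notin> span T0" using xT spT by metis
          show ?thesis unfolding T'_def dim_span using Fx xT' by (simp add: dim_insert)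
        qed
        have "dim T' \<le> dim S" using T'S dim_subset by blast
        then have lt: "dim S - dim T' < dim S - dim T0" using dT' by simp
        have "even (dim S - dim T')" using less.hyps[OF lt sT' T'S invT'] .
        then show ?thesis using dT' \<open>dim T' \<le> dim S\<close> by presburger
      qed
    qed
  qed
  have "even (dim S - dim ({0}::'a set))" by (rule main) (use sS lin linear_0 subspace_0 in auto)
  then show ?thesis by simp
qed

theorem lemma3p2:
  fixes Em :: "('n::finite) fib set" and G F :: "'n fib \<Rightarrow> 'n fib" and u0 :: "'n fib"
  assumes "Bn_gen_almost_pseudo_hermitian Em G F"
    and "u0 \<in> {x. F x = 0}"
    and "sp u0 u0 = (-1) ^ CARD('n)"
  shows "G u0 = (-1) ^ CARD('n) *\<^sub>R u0
         \<and> (\<forall>u v. Gform G (F u) (F v) = Gform G u v - sp u u0 * sp v u0)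
         \<and> (\<forall>u v. Gform G (F u) v = - Gform G u (F v))"
proof -
  define n where "n = CARD('n)"
  define s :: real where "s = (-1) ^ n"
  have s2: "s * s = 1" unfolding s_def by (simp add: power_mult_distrib[symmetric])
  have Fu0: "F u0 = 0" using assms(2) by simp
  have su0: "sp u0 u0 = s" using assms(3) unfolding s_def n_def by simp
  have s0: "s \<noteq> 0" using s2 by auto
  have u0nz: "u0 \<noteq> 0" using su0 s0 sp_zero_left by metis
  have gm: "gen_metric Em" and iG: "is_Gend Em G" and FC: "Bn_gen_almost_complex F"
    and comm: "G \<circ> F = F \<circ> G"
    using assms(1) unfolding Bn_gen_almost_pseudo_hermitian_def by auto
  have comm': "\<And>x. G (F x) = F (G x)" using comm by (metis comp_apply)
  have linF: "linear F" using FC unfolding Bn_gen_almost_complex_def by simp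
  define L where "L = i_eigenspace F"
  have iso: "isotropic L" and crk: "complex_rank L n"
    and last: "\<And>w. (\<forall>z\<in>{a + b | a b. a \<in> L \<and> b \<in> cconj ` L}. csp w z = 0) \<Longrightarrow> cext F w = 0"
    using FC unfolding Bn_gen_almost_complex_def Let_def L_def n_def by auto
  define V where "V = {a. F (F a) = - a}"
  have Lchar: "\<And>a b. (a, b) \<in> L \<longleftrightarrow> F a = - b \<and> F b = a"
    unfolding L_def i_eigenspace_def cext_def cmult_i_def by auto
  have FV: "\<And>a. a \<in> V \<Longrightarrow> F a \<in> V"
    unfolding V_def using linF by (simp add: linear_neg)
  have subV: "subspace V"
    unfolding V_def subspace_def using linF
    by (auto simp: linear_0 linear_add linear_scale)
  have fstL: "fst ` L = V"
  proof
    show "fst ` L \<subseteq> V"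
    proof
      fix a assume "a \<in> fst ` L"
      then obtain b where "(a, b) \<in> L" by force
      then show "a \<in> V" using Lchar linF unfolding V_def by (simp add: linear_neg)
    qed
    show "V \<subseteq> fst ` L"
    proof
      fix a assume "a \<in> V"
      then have "(a, - F a) \<in> L" using Lchar linF unfolding V_def by (simp add: linear_neg)
      then show "a \<in> fst ` L" by force
    qed
  qed
  have subL: "subspace L" using crk unfolding complex_rank_def complex_subspace_def by simp
  have dL: "dim L = 2 * n" using crk unfolding complex_rank_def by simp
  have injfst: "inj_on fst (span L)"
  proof (rule inj_onI)
    fix x y assume "x \<in> span L" "y \<in> span L" "fst x = fst y"
    then have "x \<in> L" "y \<in> L" using span_eq_iff[of L, THEN iffD2, OF subL] by auto
    then show "x = y" using \<open>fst x = fst y\<close>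
      by (cases x, cases y) (auto simp: Lchar)
  qed
  have dV: "dim V = 2 * n"
    using dim_image_eq[OF linear_fst injfst] fstL dL by simp
  have Viso: "\<And>a c. a \<in> V \<Longrightarrow> c \<in> V \<Longrightarrow> sp (F a) (F c) = sp a c \<and> sp a (F c) = - sp (F a) c"
  proof -
    fix a c assume a: "a \<in> V" and c: "c \<in> V"
    have "(a, - F a) \<in> L" "(c, - F c) \<in> L" using a c Lchar linF unfolding V_def by (auto simp: linear_neg)
    then have "csp (a, - F a) (c, - F c) = 0" using iso unfolding isotropic_def by blast
    then have "sp a c - sp (- F a) (- F c) = 0 \<and> sp a (- F c) + sp (- F a) c = 0"
      unfolding csp_def by (simp add: complex_eq_iff)
    then show "sp (F a) (F c) = sp a c \<and> sp a (F c) = - sp (F a) c"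
      by (simp add: sp_simps)
  qed
  have Vperp: "\<And>x. (\<forall>p\<in>V. sp x p = 0) \<Longrightarrow> F x = 0"
  proof -
    fix x assume xp: "\<forall>p\<in>V. sp x p = 0"
    have "\<forall>z\<in>{a + b | a b. a \<in> L \<and> b \<in> cconj ` L}. csp (x, 0) z = 0"
    proof
      fix z assume "z \<in> {a + b | a b. a \<in> L \<and> b \<in> cconj ` L}"
      then obtain a b' where a: "a \<in> L" and b': "b' \<in> L" and z0: "z = a + cconj b'"
        by blast
      obtain a1 a2 where a12: "a = (a1, a2)" by (cases a)
      obtain b1 b2 where b12: "b' = (b1, b2)" by (cases b')
      have ab: "(a1, a2) \<in> L" "(b1, b2) \<in> L" using a b' a12 b12 by auto
      have z: "z = (a1, a2) + (b1, - b2)" using z0 a12 b12 by (simp add: cconj_def)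
      have "a1 \<in> V" using ab(1) fstL by (metis fst_conv image_eqI)
      moreover have "b1 \<in> V" using ab(2) fstL by (metis fst_conv image_eqI)
      moreover have "a2 = - F a1" "b2 = - F b1" using ab Lchar by auto
      ultimately have "a2 \<in> V" "b2 \<in> V" using subspace_neg[OF subV] FV by auto
      note \<open>a1 \<in> V\<close> \<open>b1 \<in> V\<close> this
      then have "fst z \<in> V" "snd z \<in> V" using subV z
        by (auto intro: subspace_add subspace_diff)
      then show "csp (x, 0) z = 0" using xp unfolding csp_def by (simp add: sp_simps complex_eq_iff)
    qed
    then have "cext F (x, 0) = 0" by (rule last)
    then show "F x = 0" unfolding cext_def by (simp add: zero_prod_def)
  qed
  have DIMe: "DIM('n fib) = 2 * n + 1" unfolding n_def by simp
  have u0V: "u0 \<notin> V"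
  proof
    assume "u0 \<in> V" then have "u0 = - F (F u0)" unfolding V_def by simp
    then show False using Fu0 linF u0nz by (simp add: linear_0)
  qed
  have spV: "span V = V" using span_eq_iff[of V, THEN iffD2, OF subV] .
  have u0sV: "u0 \<notin> span V" using u0V spV by metis
  have "dim (insert u0 V) = 2 * n + 1" using u0sV dV by (simp add: dim_insert)
  then have "span (insert u0 V) = UNIV" using DIMe dim_eq_full by metis
  then have decomp: "\<And>x. \<exists>k. x - k *\<^sub>R u0 \<in> V" using span_insert[of u0 V, unfolded spV] by auto
  have kerF: "\<And>x. F x = 0 \<Longrightarrow> \<exists>k. x = k *\<^sub>R u0"
  proof -
    fix x assume Fx: "F x = 0"
    obtain k where k: "x - k *\<^sub>R u0 \<in> V" using decomp by blast
    have "F (x - k *\<^sub>R u0) = 0" using Fx Fu0 linF by (simp add: linear_diff linear_scale)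
    then have "x - k *\<^sub>R u0 = 0" using k unfolding V_def using linF by (simp add: linear_0)
    then show "\<exists>k. x = k *\<^sub>R u0" by auto
  qed
  have orth: "\<And>v. v \<in> V \<Longrightarrow> sp v u0 = 0"
  proof -
    have "dim (Jm ` V) \<le> dim V" by (rule dim_image_le[OF linear_Jm])
    then have "dim (Jm ` V) < DIM('n fib)" using dV DIMe by simp
    then obtain x where x0: "x \<noteq> 0" and xo: "\<And>y. y \<in> span (Jm ` V) \<Longrightarrow> orthogonal x y"
      using orthogonal_to_subspace_exists by blast
    have "\<forall>p\<in>V. sp x p = 0"
      using xo span_base unfolding sp_J orthogonal_def by blast
    then have "F x = 0" by (rule Vperp)
    then obtain k where xk: "x = k *\<^sub>R u0" using kerF by blast
    then have k0: "k \<noteq> 0" using x0 by auto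
    fix v assume "v \<in> V"
    then have "sp x v = 0" using \<open>\<forall>p\<in>V. sp x p = 0\<close> by blast
    then have "k * sp u0 v = 0" using xk by (simp add: sp_simps)
    then show "sp v u0 = 0" using k0 sp_sym by (metis mult_eq_0_iff)
  qed
  have coef: "\<And>x k. x - k *\<^sub>R u0 \<in> V \<Longrightarrow> k = s * sp x u0"
  proof -
    fix x k assume "x - k *\<^sub>R u0 \<in> V"
    then have "sp (x - k *\<^sub>R u0) u0 = 0" by (rule orth)
    then have "sp x u0 = k * s" using su0 by (simp add: sp_simps)
    then have "s * sp x u0 = k * (s * s)" by (simp add: algebra_simps)
    then show "k = s * sp x u0" using s2 by simp
  qed
  have Fskew: "\<And>x y. sp (F x) y = - sp x (F y)"
    and Fform: "\<And>x y. sp (F x) (F y) = sp x y - s * sp x u0 * sp y u0"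
  proof -
    fix x y
    obtain k where k: "x - k *\<^sub>R u0 \<in> V" using decomp by blast
    obtain l where l: "y - l *\<^sub>R u0 \<in> V" using decomp by blast
    define a where "a = x - k *\<^sub>R u0"
    define c where "c = y - l *\<^sub>R u0"
    have aV: "a \<in> V" and cV: "c \<in> V" using k l a_def c_def by auto
    have xe: "x = a + k *\<^sub>R u0" and ye: "y = c + l *\<^sub>R u0" using a_def c_def by auto
    have Fx: "F x = F a" and Fy: "F y = F c" using xe ye Fu0 linF by (simp_all add: linear_add linear_scale)
    have o1: "sp (F a) u0 = 0" "sp (F c) u0 = 0" "sp a u0 = 0" "sp c u0 = 0"
      using orth FV aV cV by auto
    have o2: "sp u0 (F c) = 0" "sp u0 c = 0" using o1 sp_sym by metis+
    have kk: "k = s * sp x u0" "l = s * sp y u0" using coef k l by auto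
    show "sp (F x) y = - sp x (F y)"
      unfolding Fx Fy using Viso[OF aV cV] o1 o2 unfolding xe ye by (simp add: sp_simps)
    have "sp (F x) (F y) = sp a c" unfolding Fx Fy using Viso[OF aV cV] by simp
    also have "sp a c = sp x y - k * l * s"
      unfolding xe ye using o1 o2 su0 by (simp add: sp_simps algebra_simps)
    also have "k * l * s = (s * s) * (s * sp x u0 * sp y u0)"
      unfolding kk by (simp add: algebra_simps)
    also have "\<dots> = s * sp x u0 * sp y u0" using s2 by simp
    finally show "sp (F x) (F y) = sp x y - s * sp x u0 * sp y u0" .
  qed
  have subEm: "subspace Em" and dEm: "dim Em = n"
    and nondeg: "\<And>x. x \<in> Em \<Longrightarrow> (\<forall>y\<in>Em. sp x y = 0) \<Longrightarrow> x = 0"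
    using gm unfolding gen_metric_def n_def by auto
  have linG: "linear G" and Gp: "\<And>x. x \<in> Eplus Em \<Longrightarrow> G x = x"
    and Gm: "\<And>x. x \<in> Em \<Longrightarrow> G x = - x"
    using iG unfolding is_Gend_def by auto
  define Ep where "Ep = Eplus Em"
  have Epchar: "Ep = {y \<in> UNIV. \<forall>x\<in>Jm ` Em. orthogonal x y}"
    unfolding Ep_def Eplus_def orthogonal_def sp_J by (auto simp: inner_commute)
  have subJ: "subspace (Jm ` Em)" by (rule linear_subspace_image[OF linear_Jm subEm])
  have dJ: "dim (Jm ` Em) = n"
  proof -
    have "inj_on Jm (span Em)" using inj_Jm inj_on_subset by blast
    then show ?thesis using dim_image_eq[OF linear_Jm] dEm by metis
  qed
  have "dim {y \<in> UNIV. \<forall>x\<in>Jm ` Em. orthogonal x y} + dim (Jm ` Em) = dim (UNIV :: 'n fib set)"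
    by (rule dim_subspace_orthogonal_to_vectors[OF subJ subspace_UNIV subset_UNIV])
  then have dEp: "dim Ep = n + 1" using dJ DIMe unfolding Epchar by simp
  have subEp: "subspace Ep"
    unfolding Ep_def Eplus_def subspace_def by (auto simp: sp_simps)
  have Int0: "Ep \<inter> Em = {0}"
  proof
    show "Ep \<inter> Em \<subseteq> {0}" using nondeg unfolding Ep_def Eplus_def by auto
    show "{0} \<subseteq> Ep \<inter> Em" using subEp subEm by (simp add: subspace_0)
  qed
  define Sm where "Sm = {x + y |x y. x \<in> Ep \<and> y \<in> Em}"
  have "dim Sm + dim (Ep \<inter> Em) = dim Ep + dim Em"
    unfolding Sm_def by (rule dim_sums_Int[OF subEp subEm])
  then have "dim Sm = DIM('n fib)" using Int0 dEp dEm DIMe by simp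
  then have "span Sm = UNIV" using dim_eq_full by metis
  moreover have "span Sm = Sm"
    using span_eq_iff[of Sm, THEN iffD2, OF subspace_sums[OF subEp subEm, folded Sm_def]] .
  ultimately have SmU: "Sm = UNIV" by simp
  have dec: "\<And>x. \<exists>p m. p \<in> Ep \<and> m \<in> Em \<and> x = p + m"
  proof -
    fix x
    have "x \<in> Sm" using SmU by simp
    then show "\<exists>p m. p \<in> Ep \<and> m \<in> Em \<and> x = p + m" unfolding Sm_def by blast
  qed
  have Gdec: "\<And>p m. p \<in> Ep \<Longrightarrow> m \<in> Em \<Longrightarrow> G (p + m) = p - m"
    using Gp Gm linG unfolding Ep_def by (simp add: linear_add)
  have GG: "\<And>x. G (G x) = x"
  proof -
    fix x
    obtain p m where pm: "p \<in> Ep" "m \<in> Em" "x = p + m" using dec by blast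
    have "G (G x) = G p - G m" using pm Gdec linG by (simp add: linear_diff)
    then show "G (G x) = x" using pm Gp Gm unfolding Ep_def by simp
  qed
  have cross: "\<And>p m. p \<in> Ep \<Longrightarrow> m \<in> Em \<Longrightarrow> sp p m = 0 \<and> sp m p = 0"
    unfolding Ep_def Eplus_def by (metis (mono_tags) mem_Collect_eq sp_sym)
  have Gsym: "\<And>x y. sp (G x) y = sp x (G y)"
  proof -
    fix x y
    obtain p m where pm: "p \<in> Ep" "m \<in> Em" "x = p + m" using dec by blast
    obtain p' m' where pm': "p' \<in> Ep" "m' \<in> Em" "y = p' + m'" using dec by blast
    have c1: "sp p m' = 0" "sp m p' = 0" using cross pm pm' by auto
    show "sp (G x) y = sp x (G y)"
      using Gdec[OF pm(1,2)] Gdec[OF pm'(1,2)] c1 unfolding pm(3) pm'(3)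
      by (simp add: sp_simps)
  qed
  have eigP: "\<And>y. G y = y \<Longrightarrow> y \<in> Ep"
  proof -
    fix y assume Gy: "G y = y"
    obtain p m where pm: "p \<in> Ep" "m \<in> Em" "y = p + m" using dec by blast
    have "p - m = p + m" using Gy Gdec pm by simp
    then have "m + m = 0" by (simp add: algebra_simps)
    then have "m = 0" by (metis scaleR_2 scaleR_eq_0_iff zero_neq_numeral)
    then show "y \<in> Ep" using pm by simp
  qed
  have eigM: "\<And>y. G y = - y \<Longrightarrow> y \<in> Em"
  proof -
    fix y assume Gy: "G y = - y"
    obtain p m where pm: "p \<in> Ep" "m \<in> Em" "y = p + m" using dec by blast
    have "p - m = - (p + m)" using Gy Gdec pm by simp
    then have "p + p = 0" by (simp add: algebra_simps)
    then have "p = 0" by (metis scaleR_2 scaleR_eq_0_iff zero_neq_numeral)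
    then show "y \<in> Em" using pm by simp
  qed
  have FEp: "\<forall>y\<in>Ep. F y \<in> Ep"
    using comm' Gp eigP unfolding Ep_def by metis
  have FEm: "\<forall>y\<in>Em. F y \<in> Em"
  proof
    fix y assume "y \<in> Em"
    then have "G (F y) = - F y" using comm' Gm linF by (simp add: linear_neg)
    then show "F y \<in> Em" by (rule eigM)
  qed
  have keydim: "\<And>S. subspace S \<Longrightarrow> u0 \<in> S \<Longrightarrow> \<forall>y\<in>S. F y \<in> S \<Longrightarrow> odd (dim S)"
  proof -
    fix S assume sS: "subspace S" and uS: "u0 \<in> S" and FS: "\<forall>y\<in>S. F y \<in> S"
    have sSV: "subspace (S \<inter> V)" using sS subV by (simp add: subspace_inter)
    have ev: "even (dim (S \<inter> V))"
      by (rule even_dim_cs[OF linF sSV]) (use FS FV V_def in auto)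
    have spA: "span (insert u0 (S \<inter> V)) = S"
    proof (rule span_subspace)
      show "insert u0 (S \<inter> V) \<subseteq> S" using uS by auto
      show "subspace S" by (rule sS)
      show "S \<subseteq> span (insert u0 (S \<inter> V))"
      proof
        fix y assume yS: "y \<in> S"
        obtain k where k: "y - k *\<^sub>R u0 \<in> V" using decomp by blast
        have "y - k *\<^sub>R u0 \<in> S" using yS uS sS by (simp add: subspace_diff subspace_scale)
        then have "y - k *\<^sub>R u0 \<in> span (S \<inter> V)" using k by (simp add: span_base)
        then show "y \<in> span (insert u0 (S \<inter> V))" by (auto simp: span_insert)
      qed
    qed
    have "u0 \<notin> span (S \<inter> V)"
      using u0V span_eq_iff[of "S \<inter> V", THEN iffD2, OF sSV] by (metis IntD2)
    then have "dim (insert u0 (S \<inter> V)) = dim (S \<inter> V) + 1" by (simp add: dim_insert)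
    moreover have "dim (insert u0 (S \<inter> V)) = dim S" using spA dim_span by metis
    ultimately show "odd (dim S)" using ev by simp
  qed
  obtain c where Gc: "G u0 = c *\<^sub>R u0"
  proof -
    have "F (G u0) = 0" using comm' Fu0 linG by (metis linear_0)
    then show ?thesis using kerF that by blast
  qed
  have "G (G u0) = (c * c) *\<^sub>R u0" using Gc linG by (simp add: linear_scale)
  then have "(c * c - 1) *\<^sub>R u0 = 0" using GG by (simp add: algebra_simps)
  then have "c * c = 1" using u0nz by simp
  then have "c = 1 \<or> c = -1" by algebra
  then have Gu0: "G u0 = s *\<^sub>R u0"
  proof
    assume c: "c = 1"
    then have "u0 \<in> Ep" using Gc eigP by simp
    then have "odd (n + 1)" using keydim[OF subEp _ FEp] dEp by simp
    then have "s = 1" unfolding s_def by simp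
    then show ?thesis using Gc c by simp
  next
    assume c: "c = -1"
    then have "u0 \<in> Em" using Gc eigM by simp
    then have "odd n" using keydim[OF subEm _ FEm] dEm by simp
    then have "s = -1" unfolding s_def by simp
    then show ?thesis using Gc c by simp
  qed
  have P1: "G u0 = (-1) ^ CARD('n) *\<^sub>R u0" using Gu0 unfolding s_def n_def .
  have P2: "\<forall>u v. Gform G (F u) (F v) = Gform G u v - sp u u0 * sp v u0"
  proof (intro allI)
    fix u v
    have "Gform G (F u) (F v) = sp (F (G u)) (F v)" unfolding Gform_def using comm' by simp
    also have "\<dots> = sp (G u) v - s * sp (G u) u0 * sp v u0" by (rule Fform)
    also have "sp (G u) u0 = s * sp u u0" using Gsym Gu0 by (simp add: sp_simps)
    also have "s * (s * sp u u0) = sp u u0" using s2 by (simp add: mult.assoc[symmetric])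
    finally show "Gform G (F u) (F v) = Gform G u v - sp u u0 * sp v u0"
      unfolding Gform_def by (simp add: mult.assoc)
  qed
  have P3: "\<forall>u v. Gform G (F u) v = - Gform G u (F v)"
    unfolding Gform_def using comm' Fskew by simp
  show ?thesis using P1 P2 P3 by blast
qed

end
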